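(* Let $S$ be a skew lattice that is a strong distributive solution of the Yang–Baxter equation. Then (i) the lattice $S/\mathcal{D}$ is also a strong distributive solution, and (ii) $S$ is quasi-distributive, i.e. $S/\mathcal{D}$ is a distributive lattice.
   Context: A skew lattice is a set $S$ with two binary operations $\wedge,\vee$, each idempotent and associative, satisfying the absorption laws $x\wedge(x\vee y)=x=x\vee(x\wedge y)$ and $(x\wedge y)\vee y=y=(x\vee y)\wedge y$ for all $x,y\in S$. On a skew lattice, $x\,\mathcal{D}\,y$ means $x\wedge y\wedge x=x$ and $y\wedge x\wedge y=y$; $\mathcal{D}$ is a congruence and $S/\mathcal{D}$ is a lattice (the maximal lattice image). A map $r:X\times X\to X\times X$ is a set-theoretic solution of the Yang–Baxter equation if $(r\times\mathrm{id})\circ(\mathrm{id}\times r)\circ(r\times\mathrm{id})=(\mathrm{id}\times r)\circ(r\times\mathrm{id})\circ(\mathrm{id}\times r)$. A skew lattice $S$ is a strong distributive solution if the map $r(x,y)=(x\wedge y,x\vee y)$ on $S\times S$ is a set-theoretic solution of the Yang–Baxter equation. *)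

theory Defs
  imports Main
begin

definition skew_lattice :: "'a set \<Rightarrow> ('a \<Rightarrow> 'a \<Rightarrow> 'a) \<Rightarrow> ('a \<Rightarrow> 'a \<Rightarrow> 'a) \<Rightarrow> bool" where
  "skew_lattice S m j \<longleftrightarrow>
     (\<forall>x\<in>S. \<forall>y\<in>S. m x y \<in> S \<and> j x y \<in> S) \<and>
     (\<forall>x\<in>S. m x x = x \<and> j x x = x) \<and>
     (\<forall>x\<in>S. \<forall>y\<in>S. \<forall>z\<in>S. m (m x y) z = m x (m y z) \<and> j (j x y) z = j x (j y z)) \<and>
     (\<forall>x\<in>S. \<forall>y\<in>S. m x (j x y) = x \<and> j x (m x y) = x \<and>
                       j (m x y) y = y \<and> m (j x y) y = y)"

definition r12 :: "('a \<times> 'a \<Rightarrow> 'a \<times> 'a) \<Rightarrow> 'a \<times> 'a \<times> 'a \<Rightarrow> 'a \<times> 'a \<times> 'a" where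
  "r12 r t = (case t of (x, y, z) \<Rightarrow> (fst (r (x, y)), snd (r (x, y)), z))"

definition r23 :: "('a \<times> 'a \<Rightarrow> 'a \<times> 'a) \<Rightarrow> 'a \<times> 'a \<times> 'a \<Rightarrow> 'a \<times> 'a \<times> 'a" where
  "r23 r t = (case t of (x, y, z) \<Rightarrow> (x, fst (r (y, z)), snd (r (y, z))))"

definition YB_solution :: "'a set \<Rightarrow> ('a \<times> 'a \<Rightarrow> 'a \<times> 'a) \<Rightarrow> bool" where
  "YB_solution X r \<longleftrightarrow>
     (\<forall>x\<in>X. \<forall>y\<in>X. r (x, y) \<in> X \<times> X) \<and>
     (\<forall>x\<in>X. \<forall>y\<in>X. \<forall>z\<in>X.
        r12 r (r23 r (r12 r (x, y, z))) = r23 r (r12 r (r23 r (x, y, z))))"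

definition strong_distributive_solution ::
  "'a set \<Rightarrow> ('a \<Rightarrow> 'a \<Rightarrow> 'a) \<Rightarrow> ('a \<Rightarrow> 'a \<Rightarrow> 'a) \<Rightarrow> bool" where
  "strong_distributive_solution S m j \<longleftrightarrow>
     skew_lattice S m j \<and> YB_solution S (\<lambda>(x, y). (m x y, j x y))"

definition Drel :: "'a set \<Rightarrow> ('a \<Rightarrow> 'a \<Rightarrow> 'a) \<Rightarrow> ('a \<times> 'a) set" where
  "Drel S m = {(x, y). x \<in> S \<and> y \<in> S \<and> m (m x y) x = x \<and> m (m y x) y = y}"

text \<open>Quotient S/D with the induced operations (well defined since D is a congruence).\<close>
definition quot_op :: "'a set \<Rightarrow> ('a \<Rightarrow> 'a \<Rightarrow> 'a) \<Rightarrow> ('a \<Rightarrow> 'a \<Rightarrow> 'a)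
                       \<Rightarrow> 'a set \<Rightarrow> 'a set \<Rightarrow> 'a set" where
  "quot_op S m f A B = Drel S m `` {f (SOME a. a \<in> A) (SOME b. b \<in> B)}"

definition distributive_lattice ::
  "'a set \<Rightarrow> ('a \<Rightarrow> 'a \<Rightarrow> 'a) \<Rightarrow> ('a \<Rightarrow> 'a \<Rightarrow> 'a) \<Rightarrow> bool" where
  "distributive_lattice L m j \<longleftrightarrow>
     skew_lattice L m j \<and>
     (\<forall>x\<in>L. \<forall>y\<in>L. m x y = m y x \<and> j x y = j y x) \<and>
     (\<forall>x\<in>L. \<forall>y\<in>L. \<forall>z\<in>L. m x (j y z) = j (m x y) (m x z) \<and> j x (m y z) = m (j x y) (j x z))"

end

theory Submission
  imports Defs
begin

locale band = fixes S :: "'a set" and f :: "'a\<Rightarrow>'a\<Rightarrow>'a" (infixr "\<cdot>" 70)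
  assumes cl[simp]: "x\<in>S \<Longrightarrow> y\<in>S \<Longrightarrow> x \<cdot> y \<in> S"
  and idem[simp]: "x\<in>S \<Longrightarrow> x \<cdot> x = x"
  and assoc[simp]: "x\<in>S \<Longrightarrow> y\<in>S \<Longrightarrow> z\<in>S \<Longrightarrow> (x \<cdot> y) \<cdot> z = x \<cdot> y \<cdot> z"
begin
lemma idem2[simp]: "x\<in>S \<Longrightarrow> y\<in>S \<Longrightarrow> x \<cdot> x \<cdot> y = x \<cdot> y"
  by (metis assoc idem)
lemma sq2: "a\<in>S \<Longrightarrow> b\<in>S \<Longrightarrow> a\<cdot>b\<cdot>a\<cdot>b = a\<cdot>b" using idem[of "a\<cdot>b"] by (simp only: assoc cl)
lemma sq2r: "a\<in>S \<Longrightarrow> b\<in>S \<Longrightarrow> r\<in>S \<Longrightarrow> a\<cdot>b\<cdot>a\<cdot>b\<cdot>r = a\<cdot>b\<cdot>r" using idem2[of "a\<cdot>b" r] by (simp only: assoc cl)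
lemma sq3: "a\<in>S \<Longrightarrow> b\<in>S \<Longrightarrow> c\<in>S \<Longrightarrow> a\<cdot>b\<cdot>c\<cdot>a\<cdot>b\<cdot>c = a\<cdot>b\<cdot>c" using idem[of "a\<cdot>b\<cdot>c"] by (simp only: assoc cl)
lemma sq3r: "a\<in>S \<Longrightarrow> b\<in>S \<Longrightarrow> c\<in>S \<Longrightarrow> r\<in>S \<Longrightarrow> a\<cdot>b\<cdot>c\<cdot>a\<cdot>b\<cdot>c\<cdot>r = a\<cdot>b\<cdot>c\<cdot>r" using idem2[of "a\<cdot>b\<cdot>c" r] by (simp only: assoc cl)
lemma sq4r: "a\<in>S \<Longrightarrow> b\<in>S \<Longrightarrow> c\<in>S \<Longrightarrow> d\<in>S \<Longrightarrow> r\<in>S \<Longrightarrow> a\<cdot>b\<cdot>c\<cdot>d\<cdot>a\<cdot>b\<cdot>c\<cdot>d\<cdot>r = a\<cdot>b\<cdot>c\<cdot>d\<cdot>r" using idem2[of "a\<cdot>b\<cdot>c\<cdot>d" r] by (simp only: assoc cl)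

lemma sq4: "a\<in>S \<Longrightarrow> b\<in>S \<Longrightarrow> c\<in>S \<Longrightarrow> d\<in>S \<Longrightarrow> a\<cdot>b\<cdot>c\<cdot>d\<cdot>a\<cdot>b\<cdot>c\<cdot>d = a\<cdot>b\<cdot>c\<cdot>d" using idem[of "a\<cdot>b\<cdot>c\<cdot>d"] by (simp only: assoc cl)
lemma absr: "a\<in>S \<Longrightarrow> b\<in>S \<Longrightarrow> r\<in>S \<Longrightarrow> a\<cdot>b\<cdot>a = a \<Longrightarrow> a\<cdot>b\<cdot>a\<cdot>r = a\<cdot>r"
  by (metis assoc cl)

lemma trans_D:
  assumes x: "x\<in>S" and y: "y\<in>S" and w: "w\<in>S" and h1: "x \<cdot> y \<cdot> x = x" and h2: "y \<cdot> w \<cdot> y = y"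
  shows "x\<cdot>w\<cdot>x = x"
proof -
  note hx = absr[OF x y _ h1] and hy = absr[OF y w _ h2]
  have "x\<cdot>w\<cdot>x = x\<cdot>y\<cdot>x\<cdot>w\<cdot>x" by (simp add: x y w hx)
  also have "\<dots> = x\<cdot>y\<cdot>w\<cdot>y\<cdot>x\<cdot>w\<cdot>x" by (simp add: x y w hy)
  also have "\<dots> = x\<cdot>y\<cdot>w\<cdot>x\<cdot>y\<cdot>w\<cdot>y\<cdot>x\<cdot>w\<cdot>x" using sq3r[of x y w "y\<cdot>x\<cdot>w\<cdot>x"] by (simp add: x y w)
  also have "\<dots> = x\<cdot>y\<cdot>w\<cdot>x\<cdot>y\<cdot>x\<cdot>w\<cdot>x" by (simp add: x y w hy)
  also have "\<dots> = x\<cdot>y\<cdot>w\<cdot>x\<cdot>y\<cdot>x\<cdot>w\<cdot>x\<cdot>y\<cdot>x" by (simp add: x y w h1)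
  also have "\<dots> = x\<cdot>y\<cdot>w\<cdot>x\<cdot>y\<cdot>x" using sq4[of w x y x] by (simp add: x y w)
  also have "\<dots> = x\<cdot>y\<cdot>w\<cdot>x\<cdot>y\<cdot>w\<cdot>y\<cdot>x" by (simp add: x y w hy)
  also have "\<dots> = x\<cdot>y\<cdot>w\<cdot>y\<cdot>x" using sq3r[of x y w "y\<cdot>x"] by (simp add: x y w)
  also have "\<dots> = x\<cdot>y\<cdot>x" by (simp add: x y w hy)
  also have "\<dots> = x" by (rule h1)
  finally show ?thesis .
qed

lemma rcompat:
  assumes x: "x\<in>S" and y: "y\<in>S" and z: "z\<in>S" and h: "x \<cdot> y \<cdot> x = x"
  shows "x\<cdot>z\<cdot>y\<cdot>z\<cdot>x\<cdot>z = x\<cdot>z"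
proof -
  have hr: "x\<cdot>y\<cdot>x\<cdot>r = x\<cdot>r" if "r\<in>S" for r using h assoc[of "x\<cdot>y" x r] assoc[of x y x] that x y by simp
  have "x\<cdot>z\<cdot>y\<cdot>z\<cdot>x\<cdot>z = x\<cdot>z\<cdot>y\<cdot>z\<cdot>x\<cdot>y\<cdot>x\<cdot>z" by (simp add: x y z hr)
  also have "\<dots> = x\<cdot>z\<cdot>y\<cdot>z\<cdot>x\<cdot>y\<cdot>x\<cdot>z\<cdot>y\<cdot>x\<cdot>z" using sq3[of y x z] by (simp add: x y z)
  also have "\<dots> = x\<cdot>z\<cdot>y\<cdot>z\<cdot>x\<cdot>z\<cdot>y\<cdot>x\<cdot>z" by (simp add: x y z hr)
  also have "\<dots> = x\<cdot>z\<cdot>x\<cdot>z\<cdot>y\<cdot>z\<cdot>x\<cdot>z\<cdot>y\<cdot>x\<cdot>z" using sq2r[of x z "y\<cdot>z\<cdot>x\<cdot>z\<cdot>y\<cdot>x\<cdot>z"] by (simp add: x y z)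
  also have "\<dots> = x\<cdot>z\<cdot>x\<cdot>z\<cdot>y\<cdot>x\<cdot>z" using sq4r[of z x z y "x\<cdot>z"] by (simp add: x y z)
  also have "\<dots> = x\<cdot>z\<cdot>y\<cdot>x\<cdot>z" using sq2r[of x z "y\<cdot>x\<cdot>z"] by (simp add: x y z)
  also have "\<dots> = x\<cdot>y\<cdot>x\<cdot>z\<cdot>y\<cdot>x\<cdot>z" by (simp add: x y z hr)
  also have "\<dots> = x\<cdot>y\<cdot>x\<cdot>z" using sq3[of y x z] by (simp add: x y z)
  also have "\<dots> = x\<cdot>z" by (simp add: x y z hr)
  finally show ?thesis .
qed

lemma Drel_iff: "(x,y) \<in> Drel S f \<longleftrightarrow> x\<in>S \<and> y\<in>S \<and> x\<cdot>y\<cdot>x = x \<and> y\<cdot>x\<cdot>y = y"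
  unfolding Drel_def by auto

lemma equiv_D: "equiv S (Drel S f)"
proof (rule equivI)
  show "Drel S f \<subseteq> S \<times> S" unfolding Drel_def by auto
  show "refl_on S (Drel S f)" unfolding refl_on_def Drel_iff by simp
  show "sym (Drel S f)" unfolding sym_def Drel_iff by auto
  show "trans (Drel S f)" unfolding trans_def Drel_iff by (meson trans_D)
qed

lemma rcompatD: "(x,y) \<in> Drel S f \<Longrightarrow> z\<in>S \<Longrightarrow> (x\<cdot>z, y\<cdot>z) \<in> Drel S f"
  unfolding Drel_iff using rcompat by auto
end

lemma band_flip: "band S f \<Longrightarrow> band S (\<lambda>x y. f y x)"
  unfolding band_def by auto

lemma (in band) Drel_flip: "Drel S (\<lambda>x y. f y x) = Drel S f"
  unfolding Drel_def by auto

context band begin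
lemma lcompatD: "(x,y) \<in> Drel S f \<Longrightarrow> z\<in>S \<Longrightarrow> (z\<cdot>x, z\<cdot>y) \<in> Drel S f"
proof -
  assume a: "(x,y) \<in> Drel S f" "z\<in>S"
  interpret fl: band S "\<lambda>x y. f y x" using band_flip band_axioms by blast
  show ?thesis using fl.rcompatD[of x y z] a Drel_flip by simp
qed

lemma congD: "(x,x') \<in> Drel S f \<Longrightarrow> (y,y') \<in> Drel S f \<Longrightarrow> (x\<cdot>y, x'\<cdot>y') \<in> Drel S f"
proof -
  assume a: "(x,x') \<in> Drel S f" "(y,y') \<in> Drel S f"
  hence s: "x\<in>S" "x'\<in>S" "y\<in>S" "y'\<in>S" by (auto simp: Drel_iff)
  have "(x\<cdot>y, x'\<cdot>y) \<in> Drel S f" using rcompatD a s by blast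
  moreover have "(x'\<cdot>y, x'\<cdot>y') \<in> Drel S f" using lcompatD a s by blast
  ultimately show ?thesis using equiv_D unfolding equiv_def trans_def by blast
qed
end


locale skl = fixes S :: "'a set" and m j :: "'a\<Rightarrow>'a\<Rightarrow>'a"
  assumes sk: "skew_lattice S m j"
begin
lemma clm[simp]: "x\<in>S \<Longrightarrow> y\<in>S \<Longrightarrow> m x y \<in> S" using sk unfolding skew_lattice_def by blast
lemma clj[simp]: "x\<in>S \<Longrightarrow> y\<in>S \<Longrightarrow> j x y \<in> S" using sk unfolding skew_lattice_def by blast
lemma b1: "x\<in>S \<Longrightarrow> y\<in>S \<Longrightarrow> m x (j x y) = x" using sk unfolding skew_lattice_def by blast
lemma b2: "x\<in>S \<Longrightarrow> y\<in>S \<Longrightarrow> j x (m x y) = x" using sk unfolding skew_lattice_def by blast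
lemma b3: "x\<in>S \<Longrightarrow> y\<in>S \<Longrightarrow> j (m x y) y = y" using sk unfolding skew_lattice_def by blast
lemma b4: "x\<in>S \<Longrightarrow> y\<in>S \<Longrightarrow> m (j x y) y = y" using sk unfolding skew_lattice_def by blast
lemma bandm: "band S m" using sk unfolding skew_lattice_def band_def by blast
lemma bandj: "band S j" using sk unfolding skew_lattice_def band_def by blast
end

sublocale skl \<subseteq> M: band S m by (rule bandm)
sublocale skl \<subseteq> J: band S j by (rule bandj)

lemma skl_swap: "skl S m j \<Longrightarrow> skl S j m"
  unfolding skl_def skew_lattice_def by blast

context skl begin
lemma K: assumes x: "x\<in>S" and y: "y\<in>S" and h: "m y (m x y) = y"
  shows "j x (j y x) = x"
proof -
  have e1: "j y (m x y) = m x y" using b3[of y "m x y"] h x y by simp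
  have E: "j x (j y (m x y)) = x" using b2[of x y] e1 x y by simp
  have "j x (j y x) = j x (j y (j x (j y (m x y))))" using E by simp
  also have "\<dots> = j x (j y (m x y))" using J.sq2r[of x y "m x y"] x y by simp
  also have "\<dots> = x" by (rule E)
  finally show ?thesis .
qed

lemma Drel_sub: "Drel S m \<subseteq> Drel S j"
proof
  fix p assume "p \<in> Drel S m"
  then obtain x y where p: "p = (x,y)" and h: "x\<in>S" "y\<in>S" "m x (m y x) = x" "m y (m x y) = y"
    using M.Drel_iff by (cases p) auto
  have "j y (j x y) = y" using K[of y x] h by simp
  moreover have "j x (j y x) = x" using K[of x y] h by simp
  ultimately show "p \<in> Drel S j" using p h J.Drel_iff by simp
qed

lemma Drel_eq: "Drel S j = Drel S m"
proof -
  interpret d: skl S j m using skl_swap skl_axioms by blast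
  show ?thesis using Drel_sub d.Drel_sub by blast
qed

abbreviation "D \<equiv> Drel S m"

lemma congm: "(x,x') \<in> D \<Longrightarrow> (y,y') \<in> D \<Longrightarrow> (m x y, m x' y') \<in> D"
  by (rule M.congD)
lemma congj: "(x,x') \<in> D \<Longrightarrow> (y,y') \<in> D \<Longrightarrow> (j x y, j x' y') \<in> D"
  using J.congD Drel_eq by metis

lemma hom:
  assumes cong: "\<And>x x' y y'. (x,x') \<in> D \<Longrightarrow> (y,y') \<in> D \<Longrightarrow> (f x y, f x' y') \<in> D"
    and x: "x\<in>S" and y: "y\<in>S"
  shows "quot_op S m f (D``{x}) (D``{y}) = D``{f x y}"
proof -
  have ex: "x \<in> D``{x}" "y \<in> D``{y}" using equiv_class_self[OF M.equiv_D] x y by auto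
  hence "(SOME a. a \<in> D``{x}) \<in> D``{x}" "(SOME b. b \<in> D``{y}) \<in> D``{y}" by (meson someI)+
  hence "(x, SOME a. a \<in> D``{x}) \<in> D" "(y, SOME b. b \<in> D``{y}) \<in> D" by auto
  hence "(f x y, f (SOME a. a \<in> D``{x}) (SOME b. b \<in> D``{y})) \<in> D" using cong by blast
  hence "D``{f (SOME a. a \<in> D``{x}) (SOME b. b \<in> D``{y})} = D``{f x y}"
    using equiv_class_eq[OF M.equiv_D] by (metis M.equiv_D sym_def equiv_def)
  thus ?thesis unfolding quot_op_def by simp
qed

lemma homm[simp]: "x\<in>S \<Longrightarrow> y\<in>S \<Longrightarrow> quot_op S m m (D``{x}) (D``{y}) = D``{m x y}"
  using hom[of m] congm by blast
lemma homj[simp]: "x\<in>S \<Longrightarrow> y\<in>S \<Longrightarrow> quot_op S m j (D``{x}) (D``{y}) = D``{j x y}"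
  using hom[of j] congj by blast
lemma cls_eq: "x\<in>S \<Longrightarrow> y\<in>S \<Longrightarrow> D``{x} = D``{y} \<longleftrightarrow> (x,y) \<in> D"
  using eq_equiv_class_iff[OF M.equiv_D] by blast
end


locale sds = skl + assumes yb: "YB_solution S (\<lambda>(x, y). (m x y, j x y))"
begin
lemma ybe: assumes "x\<in>S" "y\<in>S" "z\<in>S"
  shows "m (m x y) (m (j x y) z) = m x (m y z)"
    "j (m x y) (m (j x y) z) = m (j x (m y z)) (j y z)"
    "j (j x y) z = j (j x (m y z)) (j y z)"
proof -
  let ?r = "(\<lambda>(x, y). (m x y, j x y))"
  have "r12 ?r (r23 ?r (r12 ?r (x,y,z))) = r23 ?r (r12 ?r (r23 ?r (x,y,z)))"
    using yb assms unfolding YB_solution_def by blast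
  thus "m (m x y) (m (j x y) z) = m x (m y z)"
    "j (m x y) (m (j x y) z) = m (j x (m y z)) (j y z)"
    "j (j x y) z = j (j x (m y z)) (j y z)"
    by (simp_all only: r12_def r23_def prod.case fst_conv snd_conv prod.inject)
qed

lemma f6: "a\<in>S \<Longrightarrow> u\<in>S \<Longrightarrow> w\<in>S \<Longrightarrow> m a (m (j a u) w) = m a w"
  using M.assoc[of a "j a u" w] b1[of a u] by simp

lemma star: assumes a: "a\<in>S" and b: "b\<in>S" and c: "c\<in>S"
  shows "j (m a b) (m a c) = m a (j (m a b) c)"
proof -
  have "j (m a (m a b)) (m (j a (m a b)) c) = m (j a (m (m a b) c)) (j (m a b) c)"
    using ybe(2)[of a "m a b" c] a b c by simp
  moreover have "m a (m a b) = m a b" using a b by simp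
  moreover have "j a (m a b) = a" using b2 a b by simp
  moreover have "j a (m (m a b) c) = a" using b2[of a "m b c"] a b c by simp
  ultimately show ?thesis by simp
qed

lemma LD: assumes x: "x\<in>S" and y: "y\<in>S" and z: "z\<in>S"
  shows "m x (j y z) = j (m x y) (m x z)"
proof -
  have "j (m x y) (m x z) = j (m x y) (m x (m (j x y) z))" using f6[of x y z] x y z by simp
  also have "\<dots> = m x (j (m x y) (m (j x y) z))" using star[of x y "m (j x y) z"] x y z by simp
  also have "\<dots> = m x (m (j x (m y z)) (j y z))" using ybe(2)[of x y z] x y z by simp
  also have "\<dots> = m x (j y z)" using f6[of x "m y z" "j y z"] x y z by simp
  finally show ?thesis by simp
qed

lemma ballQ: "(\<forall>A\<in>S//D. P A) \<longleftrightarrow> (\<forall>x\<in>S. P (D``{x}))"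
  by (auto simp: quotient_def)

lemma inQ[simp]: "x\<in>S \<Longrightarrow> D``{x} \<in> S//D" by (rule quotientI)

lemma commM: "x\<in>S \<Longrightarrow> y\<in>S \<Longrightarrow> D``{m x y} = D``{m y x}"
  using cls_eq M.Drel_iff M.sq2 by simp
lemma commJ: "x\<in>S \<Longrightarrow> y\<in>S \<Longrightarrow> D``{j x y} = D``{j y x}"
  using cls_eq J.Drel_iff J.sq2 Drel_eq by simp

lemma skQ: "skew_lattice (S//D) (quot_op S m m) (quot_op S m j)"
  unfolding skew_lattice_def ballQ using b1 b2 b3 b4 by simp

lemma ybQ: "YB_solution (S//D) (\<lambda>(x, y). (quot_op S m m x y, quot_op S m j x y))"
  unfolding YB_solution_def ballQ
proof (intro conjI ballI)
  fix x y z assume xyz: "x\<in>S" "y\<in>S" "z\<in>S"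
  show "(\<lambda>(x, y). (quot_op S m m x y, quot_op S m j x y)) (D``{x}, D``{y}) \<in> S//D \<times> S//D"
    using xyz by simp
  note e = ybe[OF xyz]
  show "r12 (\<lambda>(x, y). (quot_op S m m x y, quot_op S m j x y))
          (r23 (\<lambda>(x, y). (quot_op S m m x y, quot_op S m j x y))
            (r12 (\<lambda>(x, y). (quot_op S m m x y, quot_op S m j x y)) (D``{x}, D``{y}, D``{z}))) =
        r23 (\<lambda>(x, y). (quot_op S m m x y, quot_op S m j x y))
          (r12 (\<lambda>(x, y). (quot_op S m m x y, quot_op S m j x y))
            (r23 (\<lambda>(x, y). (quot_op S m m x y, quot_op S m j x y)) (D``{x}, D``{y}, D``{z})))"
    unfolding r12_def r23_def using xyz by (simp del: M.assoc J.assoc add: e)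
qed

lemma RD: assumes x: "x\<in>S" and y: "y\<in>S" and z: "z\<in>S"
  shows "D``{j x (m y z)} = D``{m (j x y) (j x z)}"
proof -
  let ?J = "quot_op S m j"
  have e1: "D``{m (j x y) x} = D``{x}" using commM[of "j x y" x] b1[of x y] x y by simp
  have e2: "D``{m (j x y) z} = D``{j (m z x) (m z y)}" using commM[of "j x y" z] LD[of z x y] x y z by simp
  have e3: "D``{j x (m z x)} = D``{x}"
  proof -
    have "D``{j x (m z x)} = ?J (D``{x}) (D``{m z x})" using x z by simp
    also have "\<dots> = ?J (D``{x}) (D``{m x z})" using commM[of z x] x z by simp
    also have "\<dots> = D``{x}" using b2[of x z] x z by simp
    finally show ?thesis .
  qed
  have "D``{m (j x y) (j x z)} = D``{j (m (j x y) x) (m (j x y) z)}" using LD[of "j x y" x z] x y z by simp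
  also have "\<dots> = ?J (D``{m (j x y) x}) (D``{m (j x y) z})" using x y z by simp
  also have "\<dots> = ?J (D``{x}) (D``{j (m z x) (m z y)})" using e1 e2 by simp
  also have "\<dots> = D``{j (j x (m z x)) (m z y)}" using x y z by simp
  also have "\<dots> = ?J (D``{j x (m z x)}) (D``{m z y})" using x y z by simp
  also have "\<dots> = ?J (D``{x}) (D``{m y z})" using e3 commM[of z y] y z by simp
  also have "\<dots> = D``{j x (m y z)}" using x y z by simp
  finally show ?thesis by simp
qed

lemma distQ: "distributive_lattice (S//D) (quot_op S m m) (quot_op S m j)"
  unfolding distributive_lattice_def ballQ
proof (intro conjI ballI)
  show "skew_lattice (S // D) (quot_op S m m) (quot_op S m j)" by (rule skQ)
next
  fix x y assume xy: "x\<in>S" "y\<in>S"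
  show "quot_op S m m (D``{x}) (D``{y}) = quot_op S m m (D``{y}) (D``{x})"
    using xy commM[OF xy] by simp
  show "quot_op S m j (D``{x}) (D``{y}) = quot_op S m j (D``{y}) (D``{x})"
    using xy commJ[OF xy] by simp
next
  fix x y z assume xyz: "x\<in>S" "y\<in>S" "z\<in>S"
  show "quot_op S m m (D``{x}) (quot_op S m j (D``{y}) (D``{z})) =
        quot_op S m j (quot_op S m m (D``{x}) (D``{y})) (quot_op S m m (D``{x}) (D``{z}))"
    using xyz LD[OF xyz] by simp
  show "quot_op S m j (D``{x}) (quot_op S m m (D``{y}) (D``{z})) =
        quot_op S m m (quot_op S m j (D``{x}) (D``{y})) (quot_op S m j (D``{x}) (D``{z}))"
    using xyz RD[OF xyz] by simp
qed
end

theorem mainTheorem5: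
  fixes S :: "'a set" and m j :: "'a \<Rightarrow> 'a \<Rightarrow> 'a"
  assumes "strong_distributive_solution S m j"
  shows "strong_distributive_solution (S // Drel S m) (quot_op S m m) (quot_op S m j)
       \<and> distributive_lattice (S // Drel S m) (quot_op S m m) (quot_op S m j)"
proof -
  interpret sds S m j using assms unfolding strong_distributive_solution_def sds_def sds_axioms_def skl_def by blast
  show ?thesis using skQ ybQ distQ unfolding strong_distributive_solution_def by blast
qed
end
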